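(* Let $F\subseteq\{1,\dots,d\}$ and $\beta=\hat\beta(F)$. Let $\beta'\in\mathbb{R}^d$ have support $F'$, and let $s$ be a positive integer with $|F\cup F'|\le s$. Let $i$ be an index satisfying $Q(\beta)-\min_{\eta}Q(\beta+\eta e_i)\ge Q(\beta)-\min_{j,\eta}Q(\beta+\eta e_j)$ (i.e. $i$ attains the maximal single-coordinate decrease). Then $$|F'-F|\big(Q(\beta)-\min_\eta Q(\beta+\eta e_i)\big)\ge\frac{\rho_-(s)}{\rho_+(1)}\big(Q(\beta)-Q(\beta')\big).$$
   Context: Let $Q:\mathbb{R}^d\to\mathbb{R}$ be convex and continuously differentiable. $e_j$ is the $j$-th standard basis vector, $\mathrm{supp}(\beta)=\{j:\beta_j\ne0\}$, $\|\beta\|_0=|\mathrm{supp}(\beta)|$, $A-B$ is set difference. For $F\subseteq\{1,\dots,d\}$, $\hat\beta(F)$ denotes a minimizer of $Q$ over $\{\beta:\mathrm{supp}(\beta)\subseteq F\}$ (assumed to exist). For a positive integer $s$, the restricted strong convexity constants $\rho_-(s),\rho_+(s)>0$ are constants such that for all $\beta,\beta'\in\mathbb{R}^d$ with $\|\beta'-\beta\|_0\le s$: $\frac{\rho_-(s)}{2}\|\beta'-\beta\|^2\le Q(\beta')-Q(\beta)-\langle\nabla Q(\beta),\beta'-\beta\rangle\le\frac{\rho_+(s)}{2}\|\beta'-\beta\|^2.$ *)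

theory Defs
  imports "HOL-Analysis.Analysis"
begin

text \<open>Vectors in R^d are modelled as real^'n with d = CARD('n).\<close>

definition supp :: "real^'n \<Rightarrow> 'n set" where
  "supp x = {j. x $ j \<noteq> 0}"

definition norm0 :: "real^'n \<Rightarrow> nat" where
  "norm0 x = card (supp x)"

definition ebasis :: "'n \<Rightarrow> real^'n" where
  "ebasis j = axis j 1"

definition is_restricted_min :: "(real^'n \<Rightarrow> real) \<Rightarrow> 'n set \<Rightarrow> real^'n \<Rightarrow> bool" where
  "is_restricted_min Q F b \<longleftrightarrow> supp b \<subseteq> F \<and> (\<forall>c. supp c \<subseteq> F \<longrightarrow> Q b \<le> Q c)"

text \<open>Restricted strong convexity/smoothness with constants rm = rho_-(s), rp = rho_+(s);
  G is the gradient of Q.\<close>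
definition rsc :: "(real^'n \<Rightarrow> real) \<Rightarrow> (real^'n \<Rightarrow> real^'n) \<Rightarrow> nat \<Rightarrow> real \<Rightarrow> real \<Rightarrow> bool" where
  "rsc Q G s rm rp \<longleftrightarrow> rm > 0 \<and> rp > 0 \<and>
     (\<forall>b b'. norm0 (b' - b) \<le> s \<longrightarrow>
        rm / 2 * (norm (b' - b))^2 \<le> Q b' - Q b - G b \<bullet> (b' - b) \<and>
        Q b' - Q b - G b \<bullet> (b' - b) \<le> rp / 2 * (norm (b' - b))^2)"

end

theory Submission
  imports Defs
begin

lemma axis_facts:
  fixes g :: "real^'n"
  shows "norm0 (\<eta> *\<^sub>R ebasis j :: real^'n) \<le> 1"
    "g \<bullet> (\<eta> *\<^sub>R ebasis j) = g $ j * \<eta>"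
    "(norm (\<eta> *\<^sub>R ebasis j :: real^'n))^2 = \<eta>^2"
proof -
  have "supp (\<eta> *\<^sub>R ebasis j :: real^'n) \<subseteq> {j}"
    by (auto simp: supp_def ebasis_def axis_def)
  then show "norm0 (\<eta> *\<^sub>R ebasis j :: real^'n) \<le> 1"
    unfolding norm0_def by (metis card.insert card_mono finite.emptyI finite_insert card.empty One_nat_def insert_absorb insert_not_empty)
  show "g \<bullet> (\<eta> *\<^sub>R ebasis j) = g $ j * \<eta>"
    by (simp add: ebasis_def inner_axis)
  show "(norm (\<eta> *\<^sub>R ebasis j :: real^'n))^2 = \<eta>^2"
    by (simp add: ebasis_def)
qed

theorem mainTheorem10:
  fixes Q :: "real^'n \<Rightarrow> real" and G :: "real^'n \<Rightarrow> real^'n"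
    and rho_m rho_p :: "nat \<Rightarrow> real"
    and F :: "'n set" and b b' :: "real^'n" and s :: nat and i :: 'n
  assumes convex: "convex_on UNIV Q"
    and grad: "\<And>x. (Q has_derivative (\<lambda>h. G x \<bullet> h)) (at x)"
    and grad_cont: "continuous_on UNIV G"
    and rsc_s: "rsc Q G s (rho_m s) (rho_p s)"
    and rsc_1: "rsc Q G 1 (rho_m 1) (rho_p 1)"
    and bmin: "is_restricted_min Q F b"
    and s_pos: "s > 0"
    and card_le: "card (F \<union> supp b') \<le> s"
    and i_max: "Q b - (INF \<eta>. Q (b + \<eta> *\<^sub>R ebasis i))
                  \<ge> Q b - (INF p. Q (b + snd p *\<^sub>R ebasis (fst p)))"
  shows "real (card (supp b' - F)) * (Q b - (INF \<eta>. Q (b + \<eta> *\<^sub>R ebasis i)))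
           \<ge> rho_m s / rho_p 1 * (Q b - Q b')"
proof -
  define g where "g = G b"
  define rm where "rm = rho_m s"
  define rp where "rp = rho_p 1"
  define rm1 where "rm1 = rho_m 1"
  have rm: "rm > 0" and rp: "rp > 0" and rm1: "rm1 > 0"
    using rsc_s rsc_1 by (auto simp: rsc_def rm_def rp_def rm1_def)
  have single: "Q b + g$j*\<eta> + rm1/2*\<eta>^2 \<le> Q (b + \<eta> *\<^sub>R ebasis j)
      \<and> Q (b + \<eta> *\<^sub>R ebasis j) \<le> Q b + g$j*\<eta> + rp/2*\<eta>^2" for j \<eta>
  proof -
    have "norm0 ((b + \<eta> *\<^sub>R ebasis j) - b) \<le> 1" using axis_facts(1) by simp
    then have h: "rm1/2 * (norm ((b + \<eta> *\<^sub>R ebasis j) - b))^2 \<le> Q (b + \<eta> *\<^sub>R ebasis j) - Q b - G b \<bullet> ((b + \<eta> *\<^sub>R ebasis j) - b)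
        \<and> Q (b + \<eta> *\<^sub>R ebasis j) - Q b - G b \<bullet> ((b + \<eta> *\<^sub>R ebasis j) - b) \<le> rp/2 * (norm ((b + \<eta> *\<^sub>R ebasis j) - b))^2"
      using rsc_1 unfolding rsc_def rm1_def rp_def by blast
    have "(b + \<eta> *\<^sub>R ebasis j) - b = \<eta> *\<^sub>R ebasis j" by simp
    then have h2: "rm1/2 * \<eta>^2 \<le> Q (b + \<eta> *\<^sub>R ebasis j) - Q b - g$j*\<eta>
        \<and> Q (b + \<eta> *\<^sub>R ebasis j) - Q b - g$j*\<eta> \<le> rp/2 * \<eta>^2"
      using h by (simp only: axis_facts(2) axis_facts(3) g_def)
    then show ?thesis by linarith
  qed
  have gF: "g$j = 0" if "j \<in> F" for j
  proof -
    let ?t = "- g$j / rp"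
    have "supp (b + ?t *\<^sub>R ebasis j) \<subseteq> F"
      using bmin that by (auto simp: is_restricted_min_def supp_def ebasis_def axis_def)
    then have "Q b \<le> Q (b + ?t *\<^sub>R ebasis j)" using bmin by (auto simp: is_restricted_min_def)
    also have "\<dots> \<le> Q b + g$j*?t + rp/2*?t^2" using single by blast
    finally have "0 \<le> g$j*?t + rp/2*?t^2" by simp
    also have "g$j*?t + rp/2*?t^2 = - ((g$j)^2/(2*rp))" using rp
      by (simp add: field_simps power2_eq_square)
    finally have "(g$j)^2 \<le> 0" using rp
      by (smt (verit) divide_pos_pos zero_less_power2 power2_eq_square)
    then show ?thesis by simp
  qed
  define D where "D j = Q b - (INF \<eta>. Q (b + \<eta> *\<^sub>R ebasis j))" for j
  have bdd1: "bdd_below (range (\<lambda>\<eta>. Q (b + \<eta> *\<^sub>R ebasis j)))" for j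
  proof
    fix x assume "x \<in> range (\<lambda>\<eta>. Q (b + \<eta> *\<^sub>R ebasis j))"
    then obtain \<eta> where x: "x = Q (b + \<eta> *\<^sub>R ebasis j)" by auto
    have "Q b - ((g$j)^2/(2*rm1)) \<le> Q b + g$j*\<eta> + rm1/2*\<eta>^2"
    proof -
      have "0 \<le> (rm1*\<eta> + g$j)^2" by simp
      then show ?thesis using rm1 by (simp add: field_simps power2_eq_square)
    qed
    then show "Q b - ((g$j)^2/(2*rm1)) \<le> x" using single x by (meson order_trans)
  qed
  have Dj: "(g$j)^2/(2*rp) \<le> D j" for j
  proof -
    have "(INF \<eta>. Q (b + \<eta> *\<^sub>R ebasis j)) \<le> Q (b + (- g$j/rp) *\<^sub>R ebasis j)"
      by (rule cINF_lower[OF bdd1]) simp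
    also have "\<dots> \<le> Q b + g$j*(- g$j/rp) + rp/2*(- g$j/rp)^2" using single by blast
    also have "\<dots> = Q b - ((g$j)^2/(2*rp))" using rp by (simp add: field_simps power2_eq_square)
    finally show ?thesis unfolding D_def by simp
  qed
  have bdd2: "bdd_below (range (\<lambda>p. Q (b + snd p *\<^sub>R ebasis (fst p))))"
  proof
    fix x assume "x \<in> range (\<lambda>p. Q (b + snd p *\<^sub>R ebasis (fst p)))"
    then obtain j \<eta> where x: "x = Q (b + \<eta> *\<^sub>R ebasis j)" by auto
    have "Q b - (norm g)^2/(2*rm1) \<le> Q b - ((g$j)^2/(2*rm1))"
    proof -
      have "\<bar>g$j\<bar> \<le> norm g" by (rule component_le_norm_cart)
      then have "(g$j)^2 \<le> (norm g)^2" by (metis abs_ge_zero power2_abs power_mono)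
      then show ?thesis using rm1 by (simp add: divide_right_mono)
    qed
    also have "Q b - ((g$j)^2/(2*rm1)) \<le> Q b + g$j*\<eta> + rm1/2*\<eta>^2"
    proof -
      have "0 \<le> (rm1*\<eta> + g$j)^2" by simp
      then show ?thesis using rm1 by (simp add: field_simps power2_eq_square)
    qed
    finally show "Q b - (norm g)^2/(2*rm1) \<le> x" using single x by (meson order_trans)
  qed
  have Dle: "D j \<le> D i" for j
  proof -
    have "(INF p. Q (b + snd p *\<^sub>R ebasis (fst p))) \<le> (INF \<eta>. Q (b + \<eta> *\<^sub>R ebasis j))"
      apply (rule cINF_greatest)
      using cINF_lower[OF bdd2, of "(j, _)"] by auto
    then show ?thesis using i_max unfolding D_def by simp
  qed
  define d where "d = b' - b"
  define K where "K = supp b' - F"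
  have norm0d: "norm0 (b' - b) \<le> s"
  proof -
    have "supp (b' - b) \<subseteq> F \<union> supp b'" using bmin by (auto simp: supp_def is_restricted_min_def)
    then have "card (supp (b' - b)) \<le> card (F \<union> supp b')" by (simp add: card_mono)
    then show ?thesis using card_le by (simp add: norm0_def)
  qed
  have low: "Q b' \<ge> Q b + g \<bullet> d + rm/2 * (norm d)^2"
    using rsc_s norm0d unfolding rsc_def g_def rm_def d_def by smt
  have eq: "g \<bullet> d + rm/2 * (norm d)^2 = (\<Sum>j\<in>UNIV. g$j*d$j + rm/2*(d$j)^2)"
  proof -
    have "(norm d)^2 = (\<Sum>j\<in>UNIV. (d$j)^2)"
      unfolding power2_norm_eq_inner by (simp add: inner_vec_def power2_eq_square)
    then show ?thesis
      by (simp add: inner_vec_def sum.distrib sum_distrib_left)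
  qed
  have termj: "g$j*d$j + rm/2*(d$j)^2 \<ge> (if j \<in> K then - ((g$j)^2/(2*rm)) else 0)" for j
  proof (cases "j \<in> K")
    case True
    have "0 \<le> (rm*d$j + g$j)^2" by simp
    then show ?thesis using True rm by (simp add: field_simps power2_eq_square)
  next
    case False
    then have "g$j = 0 \<or> d$j = 0" using gF bmin
      by (auto simp: K_def d_def supp_def is_restricted_min_def)
    then show ?thesis using False rm by auto
  qed
  have "(\<Sum>j\<in>UNIV. g$j*d$j + rm/2*(d$j)^2) \<ge> (\<Sum>j\<in>UNIV. (if j \<in> K then - ((g$j)^2/(2*rm)) else 0))"
    by (rule sum_mono) (rule termj)
  also have "(\<Sum>j\<in>UNIV. (if j \<in> K then - ((g$j)^2/(2*rm)) else 0)) = - (\<Sum>j\<in>K. (g$j)^2/(2*rm))"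
    by (simp add: sum.If_cases sum_negf)
  finally have A: "Q b - Q b' \<le> (\<Sum>j\<in>K. (g$j)^2/(2*rm))" using low eq by linarith
  have "(\<Sum>j\<in>K. (g$j)^2/(2*rm)) \<le> (\<Sum>j\<in>K. rp/rm * D i)"
  proof (rule sum_mono)
    fix j assume "j \<in> K"
    have "(g$j)^2/(2*rm) = rp/rm * ((g$j)^2/(2*rp))" using rm rp by (simp add: field_simps)
    also have "\<dots> \<le> rp/rm * D i" using Dj[of j] Dle[of j] rm rp
      by (intro mult_left_mono) auto
    finally show "(g$j)^2/(2*rm) \<le> rp/rm * D i" .
  qed
  also have "\<dots> = real (card K) * (rp/rm * D i)" by simp
  finally have B: "Q b - Q b' \<le> real (card K) * (rp/rm * D i)" using A by linarith
  have "rm/rp * (Q b - Q b') \<le> rm/rp * (real (card K) * (rp/rm * D i))"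
    using B rm rp by (intro mult_left_mono) auto
  also have "\<dots> = real (card K) * D i" using rm rp by (simp add: field_simps)
  finally show ?thesis unfolding rm_def rp_def K_def D_def .
qed

end
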